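(* Let $X \in \Lambda^2_{14} = \mathfrak{g}_2$. Then there exist a $\mathrm{G}_2$-adapted frame $\mathcal{B} = \{f_1,\dots,f_7\}$ and real numbers $\lambda\geq\nu\geq\mu\geq 0$ with $\lambda = \nu + \mu$ such that the matrix $[X]_{\mathcal{B}}$, whose $(i,j)$ entry is $X(f_i,f_j)$, is block diagonal with blocks $$ (0), \quad \begin{pmatrix} 0 & -\mu \\ \mu & 0\end{pmatrix}, \quad \begin{pmatrix} 0 & -\nu \\ \nu & 0\end{pmatrix}, \quad \begin{pmatrix} 0 & -\lambda \\ \lambda & 0\end{pmatrix} $$ (in this order, occupying indices $\{1\},\{2,3\},\{4,5\},\{6,7\}$), with all other entries zero. Moreover, exactly three cases occur: (i) if $\lambda=\mu$, then $\lambda=\mu=\nu=0$ and $X=0$; (ii) if $\lambda>0$ and $\mu=0$, then $\lambda=\nu$, $\operatorname{rank}X = 4$, and $\ker X$ is the associative $3$-plane spanned by $\{f_1,f_2,f_3\}$; (iii) if $\lambda>\mu>0$, then $\operatorname{rank}X=6$ and $\ker X$ is spanned by $f_1$.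
   Context: Equip $\mathbb{R}^7$ with its standard inner product, orientation and basis. Let $\varphi = e_{123} - e_{167} - e_{527} - e_{563} - e_{415} - e_{426} - e_{437}$ ($e_{ijk} = e_i\wedge e_j\wedge e_k$) and define $\times$ by $\langle u\times v,w\rangle = \varphi(u,v,w)$. A skew bilinear form $X$ is identified with the operator $X$ given by $X(a,b)=\langle X(a),b\rangle$. $\Lambda^2_{14}=\mathfrak{g}_2$ is the set of skew bilinear forms $X$ with $X(v\times w) = X(v)\times w + v\times X(w)$ for all $v,w$. A $\mathrm{G}_2$-adapted frame is an oriented orthonormal basis $\{f_1,\dots,f_7\}$ with $f_3 = f_1\times f_2$, $f_5 = f_1\times f_4$, $f_6 = f_2\times f_4$, $f_7 = f_3\times f_4$. A $3$-dimensional subspace is associative if closed under $\times$. *)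

theory Defs
  imports "HOL-Analysis.Analysis"
begin

text \<open>Coordinates of R^7 are indexed by the numeral type 7; the paper's index i in {1..7}
  corresponds to ix i = of_nat (i - 1) (a bijection {1..7} -> UNIV::7).\<close>

definition ix :: "nat \<Rightarrow> 7" where
  "ix i = of_nat (i - 1)"

definition e :: "nat \<Rightarrow> real^7" where
  "e i = axis (ix i) 1"

text \<open>e_{ijk}(u,v,w) = det of the 3x3 matrix of the i,j,k components of u,v,w\<close>
definition e3 :: "nat \<Rightarrow> nat \<Rightarrow> nat \<Rightarrow> real^7 \<Rightarrow> real^7 \<Rightarrow> real^7 \<Rightarrow> real" where
  "e3 i j k u v w =
     u$ix i * (v$ix j * w$ix k - v$ix k * w$ix j)
   - u$ix j * (v$ix i * w$ix k - v$ix k * w$ix i)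
   + u$ix k * (v$ix i * w$ix j - v$ix j * w$ix i)"

definition phi :: "real^7 \<Rightarrow> real^7 \<Rightarrow> real^7 \<Rightarrow> real" where
  "phi u v w = e3 1 2 3 u v w - e3 1 6 7 u v w - e3 5 2 7 u v w - e3 5 6 3 u v w
             - e3 4 1 5 u v w - e3 4 2 6 u v w - e3 4 3 7 u v w"

text \<open>cross product: the unique vector with <u x v, w> = phi(u,v,w)\<close>
definition cross7 :: "real^7 \<Rightarrow> real^7 \<Rightarrow> real^7" where
  "cross7 u v = (\<chi> k. phi u v (axis k 1))"

text \<open>A skew bilinear form X(a,b) = <X a, b> is represented by the matrix X (operator a \<mapsto> X *v a).\<close>
definition skew :: "real^7^7 \<Rightarrow> bool" where
  "skew X \<longleftrightarrow> transpose X = - X"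

definition g2 :: "(real^7^7) set" where
  "g2 = {X. skew X \<and>
         (\<forall>v w. X *v cross7 v w = cross7 (X *v v) w + cross7 v (X *v w))}"

text \<open>Oriented: the matrix with rows f_1..f_7
  (in coordinates e_1..e_7) has positive determinant (rows and columns are re-indexed by the same
  bijection ix, which does not change the determinant).\<close>
definition g2_adapted :: "(7 \<Rightarrow> real^7) \<Rightarrow> bool" where
  "g2_adapted f \<longleftrightarrow>
     (\<forall>a b. f a \<bullet> f b = (if a = b then 1 else 0)) \<and>
     det (\<chi> a. f a) > 0 \<and>
     f (ix 3) = cross7 (f (ix 1)) (f (ix 2)) \<and>
     f (ix 5) = cross7 (f (ix 1)) (f (ix 4)) \<and>
     f (ix 6) = cross7 (f (ix 2)) (f (ix 4)) \<and>
     f (ix 7) = cross7 (f (ix 3)) (f (ix 4))"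

definition associative :: "(real^7) set \<Rightarrow> bool" where
  "associative V \<longleftrightarrow> subspace V \<and> dim V = 3 \<and> (\<forall>u\<in>V. \<forall>v\<in>V. cross7 u v \<in> V)"

definition normal_form :: "real \<Rightarrow> real \<Rightarrow> real \<Rightarrow> nat \<Rightarrow> nat \<Rightarrow> real" where
  "normal_form mu nu lam i j =
     (if (i, j) = (2, 3) then - mu else if (i, j) = (3, 2) then mu
      else if (i, j) = (4, 5) then - nu else if (i, j) = (5, 4) then nu
      else if (i, j) = (6, 7) then - lam else if (i, j) = (7, 6) then lam
      else 0)"

end

theory Submission
  imports Defs
begin

lemma UNIV7: "(UNIV::7 set) = {0,1,2,3,4,5,6}"
proof -
  have d: "card ({0,1,2,3,4,5,6}::7 set) = 7" by simp
  have "{0,1,2,3,4,5,6} = (UNIV::7 set)" by (rule card_subset_eq) (auto simp: d)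
  then show ?thesis by simp
qed

lemma ix_vals: "ix 1 = 0" "ix 2 = 1" "ix 3 = 2" "ix 4 = 3" "ix 5 = 4" "ix 6 = 5" "ix 7 = 6"
  by (simp_all add: ix_def)

lemma forall7: "(\<forall>i::7. P i) \<longleftrightarrow> P 0 \<and> P 1 \<and> P 2 \<and> P 3 \<and> P 4 \<and> P 5 \<and> P 6"
  by (metis UNIV7 UNIV_I insertE singletonD)

lemma sum7: "sum (f::7\<Rightarrow>'a::comm_monoid_add) UNIV = f 0 + (f 1 + (f 2 + (f 3 + (f 4 + (f 5 + f 6)))))"
  unfolding UNIV7 by simp

lemma inner7: "(x::real^7) \<bullet> y = x$0*y$0 + (x$1*y$1 + (x$2*y$2 + (x$3*y$3 + (x$4*y$4 + (x$5*y$5 + x$6*y$6)))))"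
  unfolding inner_vec_def sum7 by simp

lemma vec7_eq: "(x::real^7) = y \<longleftrightarrow> x$0=y$0 \<and> x$1=y$1 \<and> x$2=y$2 \<and> x$3=y$3 \<and> x$4=y$4 \<and> x$5=y$5 \<and> x$6=y$6"
  by (simp add: vec_eq_iff forall7)

lemma cross_comp:
"cross7 u v $ 0 = u$1 * v$2 - u$2 * v$1 + u$3 * v$4 - u$4 * v$3 - u$5 * v$6 + u$6 * v$5"
"cross7 u v $ 1 = - u$0 * v$2 + u$2 * v$0 + u$3 * v$5 + u$4 * v$6 - u$5 * v$3 - u$6 * v$4"
"cross7 u v $ 2 = u$0 * v$1 - u$1 * v$0 + u$3 * v$6 - u$4 * v$5 + u$5 * v$4 - u$6 * v$3"
"cross7 u v $ 3 = - u$0 * v$4 - u$1 * v$5 - u$2 * v$6 + u$4 * v$0 + u$5 * v$1 + u$6 * v$2"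
"cross7 u v $ 4 = u$0 * v$3 - u$1 * v$6 + u$2 * v$5 - u$3 * v$0 - u$5 * v$2 + u$6 * v$1"
"cross7 u v $ 5 = u$0 * v$6 + u$1 * v$3 - u$2 * v$4 - u$3 * v$1 + u$4 * v$2 - u$6 * v$0"
"cross7 u v $ 6 = - u$0 * v$5 + u$1 * v$4 + u$2 * v$3 - u$3 * v$2 - u$4 * v$1 + u$5 * v$0"
  by (simp_all add: cross7_def phi_def e3_def ix_def axis_def)

lemma cross_anti: "cross7 v u = - cross7 u v"
  unfolding vec7_eq by (simp add: cross_comp)

lemma cross_self[simp]: "cross7 u u = 0"
  unfolding vec7_eq by (simp add: cross_comp)

lemma cross_orth1: "cross7 u v \<bullet> u = 0"
  unfolding inner7 cross_comp by algebra

lemma cross_orth2: "cross7 u v \<bullet> v = 0"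
  unfolding inner7 cross_comp by algebra

lemma cross_cyc: "cross7 u v \<bullet> w = cross7 v w \<bullet> u"
  unfolding inner7 cross_comp by algebra


lemma cross_inner: "cross7 u v \<bullet> cross7 u w = (u \<bullet> u) * (v \<bullet> w) - (u \<bullet> v) * (u \<bullet> w)"
  unfolding inner7 cross_comp by algebra

lemma cross_double: "cross7 u (cross7 u v) = (u \<bullet> v) *\<^sub>R u - (u \<bullet> u) *\<^sub>R v"
  unfolding vec7_eq cross_comp inner7 vector_scaleR_component real_scaleR_def vector_minus_component by (intro conjI; algebra)

lemma cross_swap: "cross7 (cross7 a b) c + cross7 (cross7 a c) b = (a \<bullet> b) *\<^sub>R c + (a \<bullet> c) *\<^sub>R b - (2 * (b \<bullet> c)) *\<^sub>R a"
  unfolding vec7_eq cross_comp inner7 vector_scaleR_component real_scaleR_def vector_minus_component vector_add_component by (intro conjI; algebra)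

lemma cross_add1: "cross7 (u + w) v = cross7 u v + cross7 w v"
  unfolding vec7_eq by (simp add: cross_comp algebra_simps)
lemma cross_add2: "cross7 v (u + w) = cross7 v u + cross7 v w"
  unfolding vec7_eq by (simp add: cross_comp algebra_simps)
lemma cross_scale1: "cross7 (c *\<^sub>R u) v = c *\<^sub>R cross7 u v"
  unfolding vec7_eq by (simp add: cross_comp algebra_simps)
lemma cross_scale2: "cross7 v (c *\<^sub>R u) = c *\<^sub>R cross7 v u"
  unfolding vec7_eq by (simp add: cross_comp algebra_simps)


lemma cross_cross_same: "cross7 (cross7 a b) (cross7 a c) = (2 * (cross7 a b \<bullet> c)) *\<^sub>R a + (a \<bullet> b) *\<^sub>R cross7 a c - (a \<bullet> c) *\<^sub>R cross7 a b - (a \<bullet> a) *\<^sub>R cross7 b c"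
  unfolding vec7_eq cross_comp inner7 vector_scaleR_component real_scaleR_def vector_minus_component vector_add_component by (intro conjI; algebra)

lemma cross_assoc: "cross7 a (cross7 b c) + cross7 (cross7 a b) c = (2 * (a \<bullet> c)) *\<^sub>R b - (a \<bullet> b) *\<^sub>R c - (b \<bullet> c) *\<^sub>R a"
  unfolding vec7_eq cross_comp inner7 vector_scaleR_component real_scaleR_def vector_minus_component vector_add_component by (intro conjI; algebra)

lemma cross_zero1[simp]: "cross7 0 v = 0"
  unfolding vec7_eq by (simp add: cross_comp)
lemma cross_zero2[simp]: "cross7 v 0 = 0"
  unfolding vec7_eq by (simp add: cross_comp)
lemma cross_neg1: "cross7 (- u) v = - cross7 u v"
  unfolding vec7_eq by (simp add: cross_comp)
lemma cross_neg2: "cross7 v (- u) = - cross7 v u"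
  unfolding vec7_eq by (simp add: cross_comp)
lemma cross_diff1: "cross7 (u - w) v = cross7 u v - cross7 w v"
  unfolding vec7_eq by (simp add: cross_comp algebra_simps)
lemma cross_diff2: "cross7 v (u - w) = cross7 v u - cross7 v w"
  unfolding vec7_eq by (simp add: cross_comp algebra_simps)

lemma linear_cross2: "linear (cross7 u)"
  by (rule linearI) (simp_all add: cross_add2 cross_scale2)
lemma linear_cross1: "linear (\<lambda>v. cross7 v u)"
  by (rule linearI) (simp_all add: cross_add1 cross_scale1)

lemma continuous_on_cross2[continuous_intros]: "continuous_on S h \<Longrightarrow> continuous_on S (\<lambda>t. cross7 u (h t))"
  using linear_continuous_on[OF linear_conv_bounded_linear[THEN iffD1, OF linear_cross2[of u]]]
  by (rule continuous_on_compose2) auto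

definition special :: "real^7 \<Rightarrow> real^7 \<Rightarrow> real^7 \<Rightarrow> bool" where
  "special a b c \<longleftrightarrow> a \<bullet> a = 1 \<and> b \<bullet> b = 1 \<and> c \<bullet> c = 1 \<and> a \<bullet> b = 0 \<and> a \<bullet> c = 0 \<and> b \<bullet> c = 0
     \<and> cross7 a b \<bullet> c = 0"

definition fr :: "real^7 \<Rightarrow> real^7 \<Rightarrow> real^7 \<Rightarrow> 7 \<Rightarrow> real^7" where
  "fr a b c i = (if i = 0 then a else if i = 1 then b else if i = 2 then cross7 a b
     else if i = 3 then c else if i = 4 then cross7 a c else if i = 5 then cross7 b c
     else cross7 (cross7 a b) c)"

lemma fr_simps: "fr a b c 0 = a" "fr a b c 1 = b" "fr a b c 2 = cross7 a b" "fr a b c 3 = c"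
  "fr a b c 4 = cross7 a c" "fr a b c 5 = cross7 b c" "fr a b c 6 = cross7 (cross7 a b) c"
  by (simp_all add: fr_def)

lemma cross_orth1': "u \<bullet> cross7 u v = 0" by (metis inner_commute cross_orth1)
lemma cross_orth2': "v \<bullet> cross7 u v = 0" by (metis inner_commute cross_orth2)

lemma cross_cyc2: "cross7 u v \<bullet> w = cross7 w u \<bullet> v"
  by (metis cross_cyc)

lemma cross_flip: "cross7 u v \<bullet> w = - (cross7 u w \<bullet> v)"
  by (metis cross_cyc cross_anti inner_minus_left)

context
  fixes a b c :: "real^7"
  assumes sp: "special a b c"
begin

lemma sp_facts: "a \<bullet> a = 1" "b \<bullet> b = 1" "c \<bullet> c = 1" "a \<bullet> b = 0" "a \<bullet> c = 0" "b \<bullet> c = 0"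
  "cross7 a b \<bullet> c = 0" "b \<bullet> a = 0" "c \<bullet> a = 0" "c \<bullet> b = 0"
  using sp by (auto simp: special_def inner_commute)

lemma t_aab: "cross7 a (cross7 a b) = - b"
  by (simp add: cross_double sp_facts)
lemma t_aac: "cross7 a (cross7 a c) = - c"
  by (simp add: cross_double sp_facts)
lemma t_acb: "cross7 (cross7 a c) b = - cross7 (cross7 a b) c"
  using cross_swap[of a b c] by (simp add: sp_facts eq_neg_iff_add_eq_0 add.commute)
lemma t_bac: "cross7 b (cross7 a c) = cross7 (cross7 a b) c"
  by (metis cross_anti t_acb minus_minus)
lemma t_abac: "cross7 (cross7 a b) (cross7 a c) = - cross7 b c"
  by (simp add: cross_cross_same sp_facts)
lemma t_abc: "cross7 a (cross7 b c) = - cross7 (cross7 a b) c"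
  using cross_assoc[of a b c] by (simp add: sp_facts eq_neg_iff_add_eq_0)
lemma t_a7: "cross7 a (cross7 (cross7 a b) c) = cross7 b c"
proof -
  have e: "cross7 (cross7 a b) c = - cross7 a (cross7 b c)" using t_abc by simp
  have "cross7 a (cross7 (cross7 a b) c) = - cross7 a (cross7 a (cross7 b c))"
    unfolding e by (simp add: cross_neg2)
  also have "\<dots> = cross7 b c"
  proof -
    have "a \<bullet> cross7 b c = 0" using sp_facts(7) cross_cyc[of a b c] by (simp add: inner_commute)
    then show ?thesis by (simp add: cross_double sp_facts)
  qed
  finally show ?thesis .
qed

lemma fr_orth: "fr a b c i \<bullet> fr a b c j = (if i = j then 1 else 0)"
proof -
  have n3: "cross7 a b \<bullet> cross7 a b = 1" by (simp add: cross_inner sp_facts)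
  have n5: "cross7 a c \<bullet> cross7 a c = 1" by (simp add: cross_inner sp_facts)
  have n6: "cross7 b c \<bullet> cross7 b c = 1" by (simp add: cross_inner sp_facts)
  have n7: "cross7 (cross7 a b) c \<bullet> cross7 (cross7 a b) c = 1" by (simp add: cross_inner sp_facts n3)
  have o15: "a \<bullet> cross7 a c = 0" by (simp add: cross_orth1')
  have o25: "b \<bullet> cross7 a c = 0" using sp_facts(7) by (metis cross_flip inner_commute neg_equal_0_iff_equal)
  have o35: "cross7 a b \<bullet> cross7 a c = 0" by (simp add: cross_inner sp_facts)
  have o16: "a \<bullet> cross7 b c = 0" using sp_facts(7) by (metis cross_cyc inner_commute)
  have o36: "cross7 a b \<bullet> cross7 b c = 0"
    using cross_inner[of b a c] by (simp add: sp_facts cross_anti[of b a])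
  have o56: "cross7 a c \<bullet> cross7 b c = 0"
    using cross_inner[of c a b] by (simp add: sp_facts cross_anti[of _ c])
  have o17: "a \<bullet> cross7 (cross7 a b) c = 0"
    using o35 by (metis cross_cyc inner_commute cross_flip neg_equal_0_iff_equal)
  have o27: "b \<bullet> cross7 (cross7 a b) c = 0"
    using o36 by (metis cross_cyc inner_commute cross_flip neg_equal_0_iff_equal)
  have o57: "cross7 a c \<bullet> cross7 (cross7 a b) c = 0"
    using t_bac o25 o35 by (metis cross_cyc inner_commute cross_orth1' cross_orth2')
  have o67: "cross7 b c \<bullet> cross7 (cross7 a b) c = 0"
    using cross_inner[of c "cross7 a b" b] by (simp add: sp_facts cross_anti[of _ c] o36 inner_commute cross_orth2')
  have o34: "c \<bullet> cross7 a b = 0" using sp_facts(7) by (simp add: inner_commute)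
  have "\<forall>i j. fr a b c i \<bullet> fr a b c j = (if i = j then 1 else 0)"
    unfolding forall7 fr_simps
    by (simp add: o34 sp_facts n3 n5 n6 n7 o15 o25 o35 o16 o36 o56 o17 o27 o57 o67 inner_commute
        cross_orth1 cross_orth2 cross_orth1' cross_orth2')
  then show ?thesis by blast
qed

end

definition D :: "real^7 \<Rightarrow> real^7 \<Rightarrow> real^7 \<Rightarrow> real" where
  "D a b c = det (\<chi> i. fr a b c i)"

lemma prod7: "prod (f::7\<Rightarrow>'a::comm_monoid_mult) UNIV = f 0 * (f 1 * (f 2 * (f 3 * (f 4 * (f 5 * f 6)))))"
  unfolding UNIV7 by simp

lemma det_signed_perm:
  fixes A :: "real^7^7"
  assumes p: "p permutes UNIV"
  shows "det (\<chi> i. s i *\<^sub>R A$(p i)) = prod s UNIV * of_int (sign p) * det A"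
proof -
  have "det (\<chi> i. s i *\<^sub>R A$(p i)) = det (\<chi> i. s i *s A$(p i))"
    by (simp add: scalar_mult_eq_scaleR)
  also have "\<dots> = prod s UNIV * det (\<chi> i. A$(p i))"
    by (rule det_rows_mul)
  also have "\<dots> = prod s UNIV * of_int (sign p) * det A"
    using det_permute_rows[OF p, of A] by simp
  finally show ?thesis .
qed

lemma D_sq: assumes "special a b c" shows "D a b c * D a b c = 1"
proof -
  let ?F = "(\<chi> i. fr a b c i) :: real^7^7"
  have "?F ** transpose ?F = mat 1"
    unfolding vec_eq_iff
    by (simp add: matrix_matrix_mult_def transpose_def mat_def fr_orth[OF assms, symmetric] inner_vec_def)
  then have "det (?F ** transpose ?F) = 1" by simp
  then show ?thesis unfolding D_def det_mul det_transpose .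
qed

lemma D_swap12: assumes sp: "special a b c" shows "D b a c = D a b c"
proof -
  let ?F = "(\<chi> i. fr a b c i) :: real^7^7"
  define p where "p = Transposition.transpose (0::7) 1 \<circ> Transposition.transpose 4 5"
  define s where "s = (\<lambda>i::7. if i = 2 \<or> i = 6 then -1 else (1::real))"
  have pp: "p permutes UNIV" unfolding p_def
    by (intro permutes_compose permutes_swap_id) auto
  have sg: "sign p = 1" unfolding p_def
    by (simp add: sign_compose permutation_swap_id sign_swap_id)
  have ps: "prod s UNIV = 1" unfolding prod7 s_def by simp
  have e: "(\<chi> i. fr b a c i) = (\<chi> i. s i *\<^sub>R ?F$(p i))"
    unfolding vec_eq_iff forall7
    by (simp add: p_def s_def fr_simps cross_anti[of b a] cross_neg1)
  have "D b a c = prod s UNIV * of_int (sign p) * D a b c"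
    unfolding D_def e by (rule det_signed_perm[OF pp])
  then show ?thesis using sg ps by simp
qed

lemma D_swap23: assumes sp: "special a b c" shows "D a c b = D a b c"
proof -
  let ?F = "(\<chi> i. fr a b c i) :: real^7^7"
  define p where "p = Transposition.transpose (1::7) 3 \<circ> Transposition.transpose 2 4"
  define s where "s = (\<lambda>i::7. if i = 5 \<or> i = 6 then -1 else (1::real))"
  have pp: "p permutes UNIV" unfolding p_def
    by (intro permutes_compose permutes_swap_id) auto
  have sg: "sign p = 1" unfolding p_def
    by (simp add: sign_compose permutation_swap_id sign_swap_id)
  have ps: "prod s UNIV = 1" unfolding prod7 s_def by simp
  have e: "(\<chi> i. fr a c b i) = (\<chi> i. s i *\<^sub>R ?F$(p i))"
    unfolding vec_eq_iff forall7
    by (simp add: p_def s_def fr_simps cross_anti[of c b] t_acb[OF sp])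
  have "D a c b = prod s UNIV * of_int (sign p) * D a b c"
    unfolding D_def e by (rule det_signed_perm[OF pp])
  then show ?thesis using sg ps by simp
qed

lemma D_neg3: "D a b (- c) = D a b c"
proof -
  let ?F = "(\<chi> i. fr a b c i) :: real^7^7"
  define s where "s = (\<lambda>i::7. if i = 0 \<or> i = 1 \<or> i = 2 then 1 else (-1::real))"
  have pp: "id permutes UNIV" by (rule permutes_id)
  have ps: "prod s UNIV = 1" unfolding prod7 s_def by simp
  have e: "(\<chi> i. fr a b (-c) i) = (\<chi> i. s i *\<^sub>R ?F$(id i))"
    unfolding vec_eq_iff forall7
    by (simp add: s_def fr_simps cross_neg2)
  have "D a b (-c) = prod s UNIV * of_int (sign (id::7\<Rightarrow>7)) * D a b c"
    unfolding D_def e by (rule det_signed_perm[OF pp])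
  then show ?thesis using ps by simp
qed

lemma cont_fr: "continuous_on S h \<Longrightarrow> \<forall>i. continuous_on S (\<lambda>t. fr a b (h t) i)"
  unfolding forall7 fr_simps by (auto intro!: continuous_intros)

lemma cont_D: assumes "continuous_on S h" shows "continuous_on S (\<lambda>t. D a b (h t))"
  unfolding D_def det_def
  by (auto intro!: continuous_intros cont_fr[OF assms, rule_format])


lemma sq1: "(x::real) * x = 1 \<Longrightarrow> x = 1 \<or> x = -1"
proof -
  assume "x * x = 1"
  then have "(x - 1) * (x + 1) = 0" by (simp add: algebra_simps)
  then show ?thesis by (auto simp: eq_neg_iff_add_eq_0 add.commute)
qed

lemma unit_norm: "(x::real^7) \<bullet> x = 1 \<Longrightarrow> norm x = 1"
  by (simp add: norm_eq_sqrt_inner)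

lemma orth_exists:
  fixes vs :: "(real^7) list"
  assumes "length vs < 7"
  shows "\<exists>x::real^7. x \<bullet> x = 1 \<and> (\<forall>v\<in>set vs. x \<bullet> v = 0)"
proof -
  have "dim (set vs) \<le> card (set vs)" by (rule real_vector.dim_le_card') simp
  also have "\<dots> \<le> length vs" by (rule card_length)
  finally have dimlt: "dim (set vs) < DIM(real^7)" using assms by simp
  then obtain x :: "real^7" where x: "x \<noteq> 0" "\<And>y. y \<in> span (set vs) \<Longrightarrow> orthogonal x y"
    using orthogonal_to_subspace_exists[OF dimlt] by blast
  define y where "y = (1 / norm x) *\<^sub>R x"
  have "y \<bullet> y = 1"
    using x(1) by (simp add: y_def power2_norm_eq_inner[symmetric] power2_eq_square)
  moreover have "\<forall>v\<in>set vs. y \<bullet> v = 0"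
    using x(2) by (auto simp: y_def orthogonal_def span_base)
  ultimately show ?thesis by blast
qed

lemma D_Q:
  assumes sp: "special a b c" and sp': "special a b c'"
  shows "D a b c = D a b c'"
proof (cases "c' = - c")
  case True
  then show ?thesis using D_neg3 by simp
next
  case False
  have f: "a \<bullet> a = 1" "b \<bullet> b = 1" "a \<bullet> b = 0" "c \<bullet> c = 1" "c' \<bullet> c' = 1"
    "a \<bullet> c = 0" "b \<bullet> c = 0" "cross7 a b \<bullet> c = 0" "a \<bullet> c' = 0" "b \<bullet> c' = 0" "cross7 a b \<bullet> c' = 0"
    using sp sp' by (auto simp: special_def)
  have nc: "norm c = 1" "norm c' = 1" using f by (simp_all add: unit_norm)
  define h where "h t = (1 - t) *\<^sub>R c + t *\<^sub>R c'" for t :: real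
  have hnz: "h t \<noteq> 0" if "t \<in> {0..1}" for t
  proof
    assume h0: "h t = 0"
    then have e: "(1 - t) *\<^sub>R c = - (t *\<^sub>R c')" by (simp add: h_def eq_neg_iff_add_eq_0)
    then have "norm ((1 - t) *\<^sub>R c) = norm (t *\<^sub>R c')" by (metis norm_minus_cancel)
    then have "\<bar>1 - t\<bar> = \<bar>t\<bar>" using nc by simp
    then have t: "t = 1/2" using that by (auto simp: abs_if split: if_split_asm)
    have "(1/2::real) *\<^sub>R (c + c') = 0" using h0 by (simp add: h_def t scaleR_add_right)
    then have "c + c' = 0" by simp
    then have "c' = - c" by (simp add: eq_neg_iff_add_eq_0 add.commute)
    then show False using False by simp
  qed
  define n where "n t = (1 / norm (h t)) *\<^sub>R h t" for t
  have spn: "special a b (n t)" if "t \<in> {0..1}" for t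
  proof -
    have "n t \<bullet> n t = 1"
      using hnz[OF that] by (simp add: n_def power2_norm_eq_inner[symmetric] power2_eq_square)
    then show ?thesis
      unfolding special_def using f
      by (simp add: n_def h_def inner_add_right inner_scaleR_right)
  qed
  have cn: "continuous_on {0..1} n"
    unfolding n_def h_def using hnz unfolding h_def
    by (intro continuous_intros) auto
  have n0: "n 0 = c" using nc by (simp add: n_def h_def)
  have n1: "n 1 = c'" using nc by (simp add: n_def h_def)
  have sq: "D a b (n t) * D a b (n t) = 1" if "t \<in> {0..1}" for t
    using D_sq[OF spn[OF that]] .
  have cont: "continuous_on {0..1} (\<lambda>t. D a b (n t))" by (rule cont_D[OF cn])
  show ?thesis
  proof (rule ccontr)
    assume ne: "D a b c \<noteq> D a b c'"
    have "D a b c = 1 \<or> D a b c = -1" using sq1 D_sq[OF sp] by blast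
    moreover have "D a b c' = 1 \<or> D a b c' = -1" using sq1 D_sq[OF sp'] by blast
    ultimately have "(D a b (n 0) = -1 \<and> D a b (n 1) = 1) \<or> (D a b (n 0) = 1 \<and> D a b (n 1) = -1)"
      using ne n0 n1 by auto
    then obtain t where t: "t \<in> {0..1}" "D a b (n t) = 0"
    proof
      assume "D a b (n 0) = -1 \<and> D a b (n 1) = 1"
      then obtain t where "0 \<le> t" "t \<le> 1" "D a b (n t) = 0"
        using IVT'[of "\<lambda>t. D a b (n t)" 0 0 1] cont by auto
      then show thesis using that by auto
    next
      assume "D a b (n 0) = 1 \<and> D a b (n 1) = -1"
      then obtain t where "0 \<le> t" "t \<le> 1" "D a b (n t) = 0"
        using IVT2'[of "\<lambda>t. D a b (n t)" 1 0 0] cont by auto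
      then show thesis using that by auto
    qed
    then show False using sq[OF t(1)] by simp
  qed
qed

lemma ext3:
  assumes "a \<bullet> a = 1" "b \<bullet> b = 1" "a \<bullet> b = 0"
  shows "\<exists>c. special a b c"
proof -
  obtain x where x: "x \<bullet> x = 1" "\<forall>v\<in>set [a, b, cross7 a b]. x \<bullet> v = 0"
    using orth_exists[of "[a, b, cross7 a b]"] by auto
  then show ?thesis using assms
    by (auto simp: special_def inner_commute)
qed

lemma special_swap12: "special a b c \<Longrightarrow> special b a c"
  by (auto simp: special_def inner_commute cross_anti[of b a])

lemma D_R2:
  assumes sp: "special a b c" and sp': "special a b' c'"
  shows "D a b c = D a b' c'"
proof -
  have f: "a \<bullet> a = 1" "b \<bullet> b = 1" "a \<bullet> b = 0" "b' \<bullet> b' = 1" "a \<bullet> b' = 0"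
    using sp sp' by (auto simp: special_def)
  obtain d where d: "d \<bullet> d = 1" "\<forall>v\<in>set [a, b, cross7 a b, b', cross7 a b']. d \<bullet> v = 0"
    using orth_exists[of "[a, b, cross7 a b, b', cross7 a b']"] by auto
  have s1: "special a b d" using f d by (auto simp: special_def inner_commute)
  have s2: "special a b' d" using f d by (auto simp: special_def inner_commute)
  have y1: "cross7 a b \<bullet> d = 0" using d by (simp add: inner_commute)
  have y2: "cross7 a b' \<bullet> d = 0" using d by (simp add: inner_commute)
  have x1: "cross7 a d \<bullet> b = 0" using cross_flip[of a d b] y1 by simp
  have x2: "cross7 a d \<bullet> b' = 0" using cross_flip[of a d b'] y2 by simp
  have s3: "special a d b" unfolding special_def using f d x1 by (auto simp: inner_commute)
  have s4: "special a d b'" unfolding special_def using f d x2 by (auto simp: inner_commute)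
  have "D a b c = D a b d" by (rule D_Q[OF sp s1])
  also have "\<dots> = D a d b" by (rule D_swap23[OF s1, symmetric])
  also have "\<dots> = D a d b'" by (rule D_Q[OF s3 s4])
  also have "\<dots> = D a b' d" by (rule D_swap23[OF s2])
  also have "\<dots> = D a b' c'" by (rule D_Q[OF s2 sp'])
  finally show ?thesis .
qed

lemma D_std: "D (axis 0 1) (axis 1 1) (axis 3 1) = 1"
proof -
  have "(\<chi> i. fr (axis 0 1) (axis 1 1) (axis 3 1) i) = (mat 1 :: real^7^7)"
    unfolding vec_eq_iff forall7
    by (simp add: fr_simps cross_comp mat_def axis_def)
  then show ?thesis unfolding D_def by simp
qed

lemma D_one:
  assumes sp: "special a b c"
  shows "D a b c = 1"
proof -
  let ?e1 = "axis 0 1 :: real^7" and ?e2 = "axis 1 1 :: real^7" and ?e4 = "axis 3 1 :: real^7"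
  have f: "a \<bullet> a = 1" "b \<bullet> b = 1" "a \<bullet> b = 0"
    using sp by (auto simp: special_def)
  have e1: "?e1 \<bullet> ?e1 = 1" by (simp add: inner_axis_axis)
  obtain y where y: "y \<bullet> y = 1" "\<forall>v\<in>set [b, ?e1]. y \<bullet> v = 0"
    using orth_exists[of "[b, ?e1]"] by auto
  obtain c1 where c1: "special b y c1" using ext3[of b y] f y by (auto simp: inner_commute)
  obtain c2 where c2: "special y ?e1 c2" using ext3[of y ?e1] e1 y by auto
  have sstd: "special ?e1 ?e2 ?e4"
    unfolding special_def by (simp add: inner_axis_axis inner7 cross_comp axis_def)
  have "D a b c = D b a c" by (rule D_swap12[OF sp, symmetric])
  also have "\<dots> = D b y c1" by (rule D_R2[OF special_swap12[OF sp] c1])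
  also have "\<dots> = D y b c1" by (rule D_swap12[OF c1, symmetric])
  also have "\<dots> = D y ?e1 c2" by (rule D_R2[OF special_swap12[OF c1] c2])
  also have "\<dots> = D ?e1 y c2" by (rule D_swap12[OF c2, symmetric])
  also have "\<dots> = D ?e1 ?e2 ?e4" by (rule D_R2[OF special_swap12[OF c2] sstd])
  also have "\<dots> = 1" by (rule D_std)
  finally show ?thesis .
qed

lemma quad_nonpos:
  fixes b c :: real
  assumes "\<forall>s>0. 2 * s * b + s * s * c \<le> 0" and "b \<ge> 0"
  shows "b = 0"
proof (rule ccontr)
  assume "b \<noteq> 0"
  then have bp: "b > 0" using assms(2) by simp
  define s where "s = b / (\<bar>c\<bar> + 1)"
  have sp: "s > 0" using bp by (simp add: s_def add_pos_nonneg)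
  have "2 * s * b + s * s * c \<le> 0" using assms(1) sp by blast
  then have "s * (2 * b + s * c) \<le> 0" by (simp add: algebra_simps)
  then have h: "2 * b + s * c \<le> 0" using sp by (simp add: mult_le_0_iff)
  have "s * \<bar>c\<bar> < b"
  proof -
    have "s * \<bar>c\<bar> = b * (\<bar>c\<bar> / (\<bar>c\<bar> + 1))" by (simp add: s_def)
    also have "\<dots> < b * 1" using bp by (intro mult_strict_left_mono) auto
    finally show ?thesis by simp
  qed
  moreover have "- (s * c) \<le> s * \<bar>c\<bar>" using sp
    by (metis abs_ge_minus_self abs_mult abs_of_pos mult_minus_right)
  ultimately show False using h bp by linarith
qed

lemma eig:
  fixes t :: "real^7 \<Rightarrow> real^7" and W :: "(real^7) set"
  assumes lin: "linear t" and sym: "\<And>u v. t u \<bullet> v = u \<bullet> t v"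
    and W: "subspace W" and inv: "\<And>w. w \<in> W \<Longrightarrow> t w \<in> W" and ne: "w0 \<in> W" "w0 \<noteq> 0"
  shows "\<exists>u\<in>W. u \<bullet> u = 1 \<and> t u = (u \<bullet> t u) *\<^sub>R u \<and> (\<forall>w\<in>W. w \<bullet> t w \<le> (u \<bullet> t u) * (w \<bullet> w))"
proof -
  define K where "K = W \<inter> sphere 0 1"
  have cK: "compact K" unfolding K_def
    by (intro closed_Int_compact closed_subspace[OF W] compact_sphere)
  have w0K: "(1 / norm w0) *\<^sub>R w0 \<in> K"
    using ne W by (simp add: K_def subspace_scale)
  have bl: "bounded_linear t" using lin by (simp add: linear_conv_bounded_linear)
  have ct: "continuous_on K (\<lambda>u. u \<bullet> t u)"
    by (intro continuous_intros linear_continuous_on[OF bl])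
  obtain u where uK: "u \<in> K" and umax: "\<And>y. y \<in> K \<Longrightarrow> y \<bullet> t y \<le> u \<bullet> t u"
    using continuous_attains_sup[OF cK _ ct] w0K by blast
  define M where "M = u \<bullet> t u"
  have uW: "u \<in> W" and un: "norm u = 1" using uK by (auto simp: K_def)
  have uu: "u \<bullet> u = 1" using un by (simp add: norm_eq_1)
  have bound: "w \<bullet> t w \<le> M * (w \<bullet> w)" if wW: "w \<in> W" for w
  proof (cases "w = 0")
    case True then show ?thesis using linear_0[OF lin] by simp
  next
    case False
    define y where "y = (1 / norm w) *\<^sub>R w"
    have "y \<in> K" using False wW W by (simp add: K_def y_def subspace_scale)
    then have "y \<bullet> t y \<le> M" using umax by (simp add: M_def)
    moreover have "y \<bullet> t y = (w \<bullet> t w) / (norm w)^2"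
      by (simp add: y_def linear_scale[OF lin] power2_eq_square)
    moreover have "w \<bullet> w = (norm w)^2" by (simp add: power2_norm_eq_inner)
    ultimately show ?thesis using False
      by (simp add: divide_le_eq mult.commute)
  qed
  define r where "r = t u - M *\<^sub>R u"
  have rW: "r \<in> W" unfolding r_def using uW inv W by (simp add: subspace_diff subspace_scale)
  have key: "2 * s * (r \<bullet> r) + s * s * (r \<bullet> t r - M * (r \<bullet> r)) \<le> 0" if "s > 0" for s
  proof -
    have vW: "u + s *\<^sub>R r \<in> W" using uW rW W by (simp add: subspace_add subspace_scale)
    have "(u + s *\<^sub>R r) \<bullet> t (u + s *\<^sub>R r) \<le> M * ((u + s *\<^sub>R r) \<bullet> (u + s *\<^sub>R r))"
      by (rule bound[OF vW])
    moreover have "(u + s *\<^sub>R r) \<bullet> t (u + s *\<^sub>R r) = M + 2 * s * (r \<bullet> t u) + s * s * (r \<bullet> t r)"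
      using sym[of r u] by (simp add: linear_add[OF lin] linear_scale[OF lin] inner_add_left inner_add_right
          M_def algebra_simps inner_commute)
    moreover have "(u + s *\<^sub>R r) \<bullet> (u + s *\<^sub>R r) = 1 + 2 * s * (u \<bullet> r) + s * s * (r \<bullet> r)"
      using uu by (simp add: inner_add_left inner_add_right algebra_simps inner_commute)
    moreover have "r \<bullet> t u = r \<bullet> r + M * (u \<bullet> r)"
      by (simp add: r_def inner_diff_left inner_diff_right algebra_simps inner_commute)
    ultimately show ?thesis using uu inner_commute[of r u] by (simp add: algebra_simps)
  qed
  have "r \<bullet> r = 0"
    by (rule quad_nonpos) (use key in auto)
  then have "r = 0" by simp
  then have "t u = M *\<^sub>R u" by (simp add: r_def)
  then show ?thesis using uW uu bound by (auto simp: M_def)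
qed

lemma g2_skew_inner:
  assumes "X \<in> g2" shows "(X *v u) \<bullet> v = - (u \<bullet> (X *v v))"
proof -
  have tr: "transpose X = - X" using assms by (simp add: g2_def skew_def)
  have "(X *v u) \<bullet> v = v \<bullet> (X *v u)" by (simp add: inner_commute)
  also have "\<dots> = (v v* X) \<bullet> u" by (simp add: dot_lmul_matrix)
  also have "v v* X = transpose X *v v"
    by (metis transpose_transpose vector_transpose_matrix)
  also have "transpose X *v v = - (X *v v)" unfolding tr
    by (simp add: vec_eq_iff matrix_vector_mult_def sum_negf)
  finally show ?thesis by (simp add: inner_commute)
qed

lemma g2_deriv:
  assumes "X \<in> g2" shows "X *v cross7 v w = cross7 (X *v v) w + cross7 v (X *v w)"
  using assms by (simp add: g2_def)

lemma g2_kernel: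
  assumes "X \<in> g2" shows "\<exists>v. v \<bullet> v = 1 \<and> X *v v = 0"
proof -
  have tr: "transpose X = - X" using assms by (simp add: g2_def skew_def)
  have m: "(- X) = (\<chi> i. (-1::real) *s X$i)"
    by (simp add: vec_eq_iff)
  have "det (- X) = prod (\<lambda>i::7. -1::real) UNIV * det (\<chi> i. X$i)"
    unfolding m using det_rows_mul[of "\<lambda>i. -1" "\<lambda>i. X$i"] by simp
  then have "det (- X) = - det X" by (simp add: prod7)
  moreover have "det (- X) = det X" using det_transpose[of X] tr by simp
  ultimately have d0: "det X = 0" by simp
  have "\<not> inj (\<lambda>x. X *v x)"
    using det_nz_iff_inj[OF matrix_vector_mul_linear[of X]] d0 by simp
  then obtain x y where xy: "x \<noteq> y" "X *v x = X *v y" unfolding inj_def by blast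
  define w where "w = x - y"
  have w0: "w \<noteq> 0" and Xw: "X *v w = 0" using xy by (simp_all add: w_def matrix_vector_mult_diff_distrib)
  define v where "v = (1 / norm w) *\<^sub>R w"
  have "v \<bullet> v = 1" using w0 by (simp add: v_def power2_norm_eq_inner[symmetric] power2_eq_square)
  moreover have "X *v v = 0" by (simp add: v_def Xw matrix_vector_mult_scaleR)
  ultimately show ?thesis by blast
qed

lemma Xfr:
  assumes g: "X \<in> g2" and sp: "special a b c" and Xa: "X *v a = 0"
    and Xb: "X *v b = - \<alpha> *\<^sub>R cross7 a b" and Xc: "X *v c = - \<beta> *\<^sub>R cross7 a c"
  shows "X *v cross7 a b = \<alpha> *\<^sub>R b" "X *v cross7 a c = \<beta> *\<^sub>R c"
    "X *v cross7 b c = - (\<alpha> + \<beta>) *\<^sub>R cross7 (cross7 a b) c"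
    "X *v cross7 (cross7 a b) c = (\<alpha> + \<beta>) *\<^sub>R cross7 b c"
proof -
  show 1: "X *v cross7 a b = \<alpha> *\<^sub>R b"
    by (simp add: g2_deriv[OF g] Xa Xb cross_scale2 cross_neg2 t_aab[OF sp])
  show 2: "X *v cross7 a c = \<beta> *\<^sub>R c"
    by (simp add: g2_deriv[OF g] Xa Xc cross_scale2 cross_neg2 t_aac[OF sp])
  show "X *v cross7 b c = - (\<alpha> + \<beta>) *\<^sub>R cross7 (cross7 a b) c"
    by (simp add: g2_deriv[OF g] Xb Xc cross_scale1 cross_scale2 cross_neg1 cross_neg2 t_bac[OF sp] algebra_simps)
  have e: "X *v cross7 (cross7 a b) c = cross7 (X *v cross7 a b) c + cross7 (cross7 a b) (X *v c)"
    by (rule g2_deriv[OF g])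
  show "X *v cross7 (cross7 a b) c = (\<alpha> + \<beta>) *\<^sub>R cross7 b c"
    unfolding e by (simp add: 1 Xc cross_scale1 cross_scale2 cross_neg1 cross_neg2 t_abac[OF sp] algebra_simps)
qed


lemma subspace_perp: "subspace {v::real^7. \<forall>x\<in>set xs. x \<bullet> v = 0}"
  by (auto simp: subspace_def inner_add_right inner_scaleR_right)

lemma construct:
  assumes g: "X \<in> g2"
  shows "\<exists>a b c \<alpha> \<beta>. special a b c \<and> X *v a = 0 \<and> X *v b = - \<alpha> *\<^sub>R cross7 a b \<and>
     X *v c = - \<beta> *\<^sub>R cross7 a c \<and> 0 \<le> \<alpha> \<and> \<alpha> \<le> \<beta>"
proof -
  obtain f1 where f1: "f1 \<bullet> f1 = 1" "X *v f1 = 0" using g2_kernel[OF g] by blast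
  define t where "t = (\<lambda>v. cross7 f1 (X *v v))"
  have lin: "linear t"
  proof -
    have "linear (cross7 f1 \<circ> (\<lambda>v. X *v v))"
      by (rule linear_compose[OF matrix_vector_mul_linear linear_cross2])
    then show ?thesis by (simp add: t_def o_def)
  qed
  have sym: "t u \<bullet> v = u \<bullet> t v" for u v
  proof -
    have "t u \<bullet> v = - (cross7 f1 v \<bullet> (X *v u))" by (simp add: t_def cross_flip[of f1 "X *v u" v])
    also have "\<dots> = - ((X *v u) \<bullet> cross7 f1 v)" by (simp add: inner_commute)
    also have "\<dots> = u \<bullet> (X *v cross7 f1 v)" by (simp add: g2_skew_inner[OF g])
    also have "\<dots> = u \<bullet> t v" by (simp add: g2_deriv[OF g] f1 t_def)
    finally show ?thesis .
  qed
  have tJ: "t (cross7 f1 v) = cross7 f1 (t v)" for v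
    by (simp add: t_def g2_deriv[OF g] f1)
  have Xform: "X *v u = - a *\<^sub>R cross7 f1 u" if u1: "f1 \<bullet> u = 0" and tu: "t u = a *\<^sub>R u" for u a
  proof -
    have z: "f1 \<bullet> (X *v u) = 0"
      using g2_skew_inner[OF g, of f1 u] f1 by simp
    have "cross7 f1 (t u) = - (X *v u)"
      by (simp add: t_def cross_double z f1)
    then have "- (X *v u) = a *\<^sub>R cross7 f1 u" using tu by (simp add: cross_scale2)
    then show ?thesis by (metis minus_minus scaleR_minus_left)
  qed
  define W1 where "W1 = {v::real^7. \<forall>x\<in>set [f1]. x \<bullet> v = 0}"
  have sW1: "subspace W1" unfolding W1_def by (rule subspace_perp)
  have iW1: "t w \<in> W1" if "w \<in> W1" for w
    by (simp add: W1_def t_def cross_orth1')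
  obtain x1 where x1: "x1 \<bullet> x1 = 1" "\<forall>v\<in>set [f1]. x1 \<bullet> v = 0"
    using orth_exists[of "[f1]"] by auto
  have x1W: "x1 \<in> W1" using x1 by (simp add: W1_def inner_commute)
  have x1nz: "x1 \<noteq> 0" using x1 by auto
  obtain p where pW: "p \<in> W1" and pp: "p \<bullet> p = 1" and tp: "t p = (p \<bullet> t p) *\<^sub>R p"
      and b1: "\<forall>w\<in>W1. w \<bullet> t w \<le> (p \<bullet> t p) * (w \<bullet> w)"
    using eig[OF lin sym sW1 iW1 x1W x1nz] by blast
  define M where "M = p \<bullet> t p"
  have tp': "t p = M *\<^sub>R p" using tp by (simp add: M_def)
  have f1p: "f1 \<bullet> p = 0" using pW by (simp add: W1_def)
  define W2 where "W2 = {v::real^7. \<forall>x\<in>set [f1, p, cross7 f1 p]. x \<bullet> v = 0}"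
  have sW2: "subspace W2" unfolding W2_def by (rule subspace_perp)
  have iW2: "t w \<in> W2" if wW: "w \<in> W2" for w
  proof -
    have w: "f1 \<bullet> w = 0" "p \<bullet> w = 0" "cross7 f1 p \<bullet> w = 0" using wW by (auto simp: W2_def)
    have "f1 \<bullet> t w = 0" by (simp add: t_def cross_orth1')
    moreover have "p \<bullet> t w = 0"
      using sym[of p w] w tp' by (simp add: inner_commute)
    moreover have "cross7 f1 p \<bullet> t w = 0"
      using sym[of "cross7 f1 p" w] w tJ[of p] tp' by (simp add: inner_commute cross_scale2)
    ultimately show ?thesis by (simp add: W2_def)
  qed
  obtain x2 where x2: "x2 \<bullet> x2 = 1" "\<forall>v\<in>set [f1, p, cross7 f1 p]. x2 \<bullet> v = 0"
    using orth_exists[of "[f1, p, cross7 f1 p]"] by auto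
  have x2W: "x2 \<in> W2" using x2 by (auto simp: W2_def inner_commute)
  have x2nz: "x2 \<noteq> 0" using x2 by auto
  obtain q where qW: "q \<in> W2" and qq: "q \<bullet> q = 1" and tq: "t q = (q \<bullet> t q) *\<^sub>R q"
      and b2: "\<forall>w\<in>W2. w \<bullet> t w \<le> (q \<bullet> t q) * (w \<bullet> w)"
    using eig[OF lin sym sW2 iW2 x2W x2nz] by blast
  define m where "m = q \<bullet> t q"
  have tq': "t q = m *\<^sub>R q" using tq by (simp add: m_def)
  have qf: "f1 \<bullet> q = 0" "p \<bullet> q = 0" "cross7 f1 p \<bullet> q = 0" using qW by (auto simp: W2_def)
  have Xq: "X *v q = - m *\<^sub>R cross7 f1 q" by (rule Xform[OF qf(1) tq'])
  have Xp: "X *v p = - M *\<^sub>R cross7 f1 p" by (rule Xform[OF f1p tp'])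
  have sp: "special f1 q p"
  proof -
    have "cross7 f1 q \<bullet> p = 0" using cross_flip[of f1 q p] qf(3) by simp
    then show ?thesis using f1 pp qq f1p qf unfolding special_def by (simp add: inner_commute)
  qed
  have mM: "m \<le> M"
  proof -
    have "q \<in> W1" using qf by (simp add: W1_def)
    then have "q \<bullet> t q \<le> M * (q \<bullet> q)" using b1 by (simp add: M_def)
    then show ?thesis using qq by (simp add: m_def)
  qed
  note XF = Xfr[OF g sp f1(2) Xq Xp]
  let ?f6 = "cross7 q p"
  have f6W: "?f6 \<in> W2"
    using fr_orth[OF sp, of 0 5] fr_orth[OF sp, of 3 5] fr_orth[OF sp, of 4 5]
    by (simp add: W2_def fr_simps)
  have tf6: "t ?f6 = - (m + M) *\<^sub>R ?f6"
    by (simp add: t_def XF(3) cross_scale2 t_a7[OF sp])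
  have n6: "?f6 \<bullet> ?f6 = 1" using fr_orth[OF sp, of 5 5] by (simp add: fr_simps)
  have mM2: "- (m + M) \<le> m"
    using b2 f6W tf6 n6 by (force simp: m_def)
  show ?thesis
  proof (cases "0 \<le> m")
    case True
    then show ?thesis using sp f1(2) Xq Xp mM by blast
  next
    case False
    have sp2: "special (- f1) q ?f6"
    proof -
      have "cross7 f1 q \<bullet> ?f6 = 0" using fr_orth[OF sp, of 2 5] by (simp add: fr_simps)
      moreover have "f1 \<bullet> ?f6 = 0" "q \<bullet> ?f6 = 0"
        using fr_orth[OF sp, of 0 5] fr_orth[OF sp, of 1 5] by (simp_all add: fr_simps)
      ultimately show ?thesis using f1 qq n6 qf unfolding special_def
        by (simp add: cross_neg1)
    qed
    have X1: "X *v (- f1) = 0" using f1(2) linear_neg[OF matrix_vector_mul_linear[of X], of f1] by simp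
    have X2: "X *v q = - (- m) *\<^sub>R cross7 (- f1) q" using Xq by (simp add: cross_neg1)
    have X3: "X *v ?f6 = - (m + M) *\<^sub>R cross7 (- f1) ?f6"
      using XF(3) t_abc[OF sp] by (simp add: cross_neg1)
    show ?thesis
      using sp2 X1 X2 X3 False mM2 by (intro exI[of _ "- f1"] exI[of _ q] exI[of _ ?f6] exI[of _ "- m"] exI[of _ "m + M"]) auto
  qed
qed

lemma ball17: "(\<forall>i\<in>{1..7::nat}. P i) \<longleftrightarrow> P 1 \<and> P 2 \<and> P 3 \<and> P 4 \<and> P 5 \<and> P 6 \<and> P 7"
proof -
  have "{1..7::nat} = {1,2,3,4,5,6,7}" by auto
  then show ?thesis by simp
qed

context
  fixes a b c :: "real^7"
  assumes sp: "special a b c"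
begin

lemma fr_inj: "fr a b c i = fr a b c j \<longleftrightarrow> i = j"
  using fr_orth[OF sp, of i j] fr_orth[OF sp, of i i] by (auto split: if_splits)

lemma fr_nz: "fr a b c i \<noteq> 0"
  using fr_orth[OF sp, of i i] by auto

lemma fr_expand: "w = (\<Sum>i\<in>UNIV. (fr a b c i \<bullet> w) *\<^sub>R fr a b c i)"
proof -
  let ?F = "(\<chi> i. fr a b c i) :: real^7^7"
  have "?F ** transpose ?F = mat 1"
    unfolding vec_eq_iff
    by (simp add: matrix_matrix_mult_def transpose_def mat_def fr_orth[OF sp, symmetric] inner_vec_def)
  then have "transpose ?F ** ?F = mat 1" using matrix_left_right_inverse by blast
  then have "w = transpose ?F *v (?F *v w)" by (metis matrix_vector_mul_assoc matrix_vector_mul_lid)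
  also have "\<dots> = (\<Sum>i\<in>UNIV. (fr a b c i \<bullet> w) *\<^sub>R fr a b c i)"
    by (simp add: vec_eq_iff matrix_vector_mult_def transpose_def inner_vec_def sum_component mult.commute)
  finally show ?thesis .
qed

lemma in_span_fr: "(\<And>i. i \<notin> I \<Longrightarrow> fr a b c i \<bullet> v = 0) \<Longrightarrow> v \<in> span (fr a b c ` I)"
proof -
  assume z: "\<And>i. i \<notin> I \<Longrightarrow> fr a b c i \<bullet> v = 0"
  have "(\<Sum>i\<in>UNIV. (fr a b c i \<bullet> v) *\<^sub>R fr a b c i) \<in> span (fr a b c ` I)"
  proof (rule span_sum)
    fix i :: 7
    show "(fr a b c i \<bullet> v) *\<^sub>R fr a b c i \<in> span (fr a b c ` I)"
      using span_scale[OF span_base[OF imageI[of i I "fr a b c"]], of "fr a b c i \<bullet> v"]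
      by (cases "i \<in> I") (auto simp: z span_zero)
  qed
  then show ?thesis using fr_expand[of v] by simp
qed

lemma range_in_span:
  "(\<And>i. X *v fr a b c i \<in> span S) \<Longrightarrow> X *v w \<in> span S"
proof -
  assume h: "\<And>i. X *v fr a b c i \<in> span S"
  have "X *v w = X *v (\<Sum>i\<in>UNIV. (fr a b c i \<bullet> w) *\<^sub>R fr a b c i)" using fr_expand[of w] by simp
  also have "\<dots> = (\<Sum>i\<in>UNIV. (fr a b c i \<bullet> w) *\<^sub>R (X *v fr a b c i))"
    by (simp add: linear_sum[OF matrix_vector_mul_linear] matrix_vector_mult_scaleR)
  also have "\<dots> \<in> span S" by (intro span_sum span_scale h)
  finally show ?thesis .
qed

lemma dim_fr_img: "dim (span (fr a b c ` I)) = card I"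
proof -
  have ind: "independent (fr a b c ` I)"
  proof (rule pairwise_orthogonal_independent)
    show "pairwise orthogonal (fr a b c ` I)"
      unfolding pairwise_def orthogonal_def using fr_orth[OF sp] by auto
    show "0 \<notin> fr a b c ` I" using fr_nz by auto
  qed
  have inj: "inj_on (fr a b c) I" unfolding inj_on_def using fr_inj by auto
  have "dim (span (fr a b c ` I)) = dim (fr a b c ` I)" by simp
  also have "\<dots> = card (fr a b c ` I)" using ind by (rule dim_eq_card_independent)
  also have "\<dots> = card I" using inj by (rule card_image)
  finally show ?thesis .
qed

lemma assoc_span: "associative (span {a, b, cross7 a b})"
proof -
  let ?B = "{a, b, cross7 a b}"
  have f: "a \<bullet> a = 1" "b \<bullet> b = 1" "a \<bullet> b = 0" "b \<bullet> a = 0" using sp_facts[OF sp] by auto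
  have e1: "cross7 b (cross7 a b) = a"
    using cross_double[of b a] f by (simp add: cross_anti[of b a] cross_neg2)
  have e2: "cross7 (cross7 a b) a = b"
    using t_aab[OF sp] by (simp add: cross_anti[of a "cross7 a b"])
  have e3: "cross7 (cross7 a b) b = - a"
    using e1 cross_anti[of b "cross7 a b"] by (metis minus_minus)
  have m: "a \<in> span ?B" "b \<in> span ?B" "cross7 a b \<in> span ?B" by (auto intro: span_base)
  have mn: "- a \<in> span ?B" "- b \<in> span ?B" "- cross7 a b \<in> span ?B" by (auto intro: span_neg m)
  have base: "cross7 x y \<in> span ?B" if "x \<in> ?B" "y \<in> ?B" for x y
  proof -
    have "cross7 x y \<in> {0, a, b, cross7 a b, -a, -b, -cross7 a b}"
      using that by (auto simp: e1 e2 e3 t_aab[OF sp] cross_anti[of b a])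
    then show ?thesis using m mn span_zero by auto
  qed
  have step1: "cross7 x y \<in> span ?B" if x: "x \<in> ?B" and y: "y \<in> span ?B" for x y
  proof -
    have "subspace {y. cross7 x y \<in> span ?B}"
      by (auto simp: subspace_def cross_add2 cross_scale2 span_zero intro!: span_add span_scale)
    then show ?thesis using span_induct[OF y, of "\<lambda>y. cross7 x y \<in> span ?B"] base[OF x] by blast
  qed
  have step2: "cross7 x y \<in> span ?B" if x: "x \<in> span ?B" and y: "y \<in> span ?B" for x y
  proof -
    have "subspace {x. cross7 x y \<in> span ?B}"
      by (auto simp: subspace_def cross_add1 cross_scale1 span_zero intro!: span_add span_scale)
    then show ?thesis using span_induct[OF x, of "\<lambda>x. cross7 x y \<in> span ?B"] step1[OF _ y] by blast
  qed
  have "?B = fr a b c ` {0,1,2}" by (simp add: fr_simps)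
  then have "dim (span ?B) = 3" using dim_fr_img[of "{0,1,2}"] by simp
  then show ?thesis unfolding associative_def using step2 by simp
qed

end

lemma kernel_subspace: fixes X :: "real^7^7" shows "subspace {v. X *v v = (0::real^7)}"
  by (auto simp: subspace_def linear_add[OF matrix_vector_mul_linear] linear_scale[OF matrix_vector_mul_linear])

lemma range_subspace: fixes X :: "real^7^7" shows "subspace (range (\<lambda>x::real^7. X *v x))"
proof -
  have "0 \<in> range (\<lambda>x::real^7. X *v x)" by (metis rangeI matrix_vector_mult_0_right)
  moreover have "x + y \<in> range (\<lambda>x::real^7. X *v x)" if xr: "x \<in> range (\<lambda>x::real^7. X *v x)" and yr: "y \<in> range (\<lambda>x::real^7. X *v x)" for x y
  proof -
    obtain u where "x = X *v u" using xr by blast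
    moreover obtain v where "y = X *v v" using yr by blast
    ultimately show ?thesis using linear_add[OF matrix_vector_mul_linear, of X u v] by (metis rangeI)
  qed
  moreover have "k *\<^sub>R x \<in> range (\<lambda>x::real^7. X *v x)" if xr: "x \<in> range (\<lambda>x::real^7. X *v x)" for x k
  proof -
    obtain u where "x = X *v u" using xr by blast
    then show ?thesis using linear_scale[OF matrix_vector_mul_linear, of X k u] by (metis rangeI)
  qed
  ultimately show ?thesis unfolding subspace_def by blast
qed

lemma ix_Suc0: "ix (Suc 0) = 0" by (simp add: ix_def)

lemma conclude:
  fixes X :: "real^7^7"
  assumes g: "X \<in> g2" and sp: "special a b c" and Xa: "X *v a = 0"
    and Xb: "X *v b = - \<alpha> *\<^sub>R cross7 a b" and Xc: "X *v c = - \<beta> *\<^sub>R cross7 a c"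
    and a0: "0 \<le> \<alpha>" and ab: "\<alpha> \<le> \<beta>"
  shows "\<exists>f lam nu mu. g2_adapted f \<and> lam \<ge> nu \<and> nu \<ge> mu \<and> mu \<ge> 0 \<and> lam = nu + mu \<and>
     (\<forall>i\<in>{1..7}. \<forall>j\<in>{1..7}. (X *v f (ix i)) \<bullet> f (ix j) = normal_form mu nu lam i j) \<and>
     (lam = mu \<or> (lam > 0 \<and> mu = 0) \<or> (lam > mu \<and> mu > 0)) \<and>
     (lam = mu \<longrightarrow> lam = 0 \<and> mu = 0 \<and> nu = 0 \<and> X = 0) \<and>
     (lam > 0 \<and> mu = 0 \<longrightarrow> lam = nu \<and> rank X = 4 \<and>
        {v. X *v v = 0} = span {f (ix 1), f (ix 2), f (ix 3)} \<and>
        associative (span {f (ix 1), f (ix 2), f (ix 3)})) \<and>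
     (lam > mu \<and> mu > 0 \<longrightarrow> rank X = 6 \<and> {v. X *v v = 0} = span {f (ix 1)})"
proof -
  note XF = Xfr[OF g sp Xa Xb Xc]
  let ?f = "fr a b c"
  have Xf: "X *v ?f 0 = 0" "X *v ?f 1 = - \<alpha> *\<^sub>R ?f 2" "X *v ?f 2 = \<alpha> *\<^sub>R ?f 1"
    "X *v ?f 3 = - \<beta> *\<^sub>R ?f 4" "X *v ?f 4 = \<beta> *\<^sub>R ?f 3"
    "X *v ?f 5 = - (\<alpha> + \<beta>) *\<^sub>R ?f 6" "X *v ?f 6 = (\<alpha> + \<beta>) *\<^sub>R ?f 5"
    by (simp_all add: fr_simps Xa Xb Xc XF)
  have adapted: "g2_adapted ?f"
    unfolding g2_adapted_def
    using fr_orth[OF sp] D_one[OF sp] by (simp add: D_def ix_vals ix_Suc0 fr_simps ix_def)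
  have entries: "\<forall>i\<in>{1..7}. \<forall>j\<in>{1..7}. (X *v ?f (ix i)) \<bullet> ?f (ix j) = normal_form \<alpha> \<beta> (\<alpha> + \<beta>) i j"
    unfolding ball17 ix_vals ix_Suc0
    by (simp add: Xf fr_orth[OF sp] normal_form_def)
  have kz: "v \<bullet> (X *v ?f j) = 0" if "X *v v = 0" for v j
    using g2_skew_inner[OF g, of v "?f j"] that by simp
  have sk: "subspace {v. X *v v = 0}" by (rule kernel_subspace)
  have rs: "subspace (range (\<lambda>x. X *v x))" by (rule range_subspace)
  have inr: "X *v w \<in> range (\<lambda>x. X *v x)" for w by simp
  have mneg: "X *v (- x) = - (X *v x)" for x using linear_neg[OF matrix_vector_mul_linear, of X x] by simp
  have fr_comm: "?f i \<bullet> v = v \<bullet> ?f i" for i v by (simp add: inner_commute)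
  have case1: "\<alpha> + \<beta> = \<alpha> \<longrightarrow> \<alpha> + \<beta> = 0 \<and> \<alpha> = 0 \<and> \<beta> = 0 \<and> X = 0"
  proof
    assume "\<alpha> + \<beta> = \<alpha>"
    then have z: "\<alpha> = 0" "\<beta> = 0" using a0 ab by auto
    have all0: "\<forall>i. X *v ?f i = 0" unfolding forall7 by (simp add: Xf z)
    have "X *v w \<in> span {}" for w
      by (rule range_in_span[OF sp]) (simp add: all0)
    then have "X *v w = 0 *v w" for w by simp
    then have "X = 0" by (simp add: matrix_eq)
    then show "\<alpha> + \<beta> = 0 \<and> \<alpha> = 0 \<and> \<beta> = 0 \<and> X = 0" using z by simp
  qed
  have case2: "\<alpha> + \<beta> > 0 \<and> \<alpha> = 0 \<longrightarrow> \<alpha> + \<beta> = \<beta> \<and> rank X = 4 \<and>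
        {v. X *v v = 0} = span {?f (ix 1), ?f (ix 2), ?f (ix 3)} \<and>
        associative (span {?f (ix 1), ?f (ix 2), ?f (ix 3)})"
  proof
    assume h: "\<alpha> + \<beta> > 0 \<and> \<alpha> = 0"
    then have z: "\<alpha> = 0" and bp: "\<beta> > 0" by auto
    have S: "{?f (ix 1), ?f (ix 2), ?f (ix 3)} = ?f ` {0,1,2}" by (simp add: ix_vals ix_Suc0)
    have ker: "{v. X *v v = 0} = span (?f ` {0,1,2})"
    proof
      show "{v. X *v v = 0} \<subseteq> span (?f ` {0,1,2})"
      proof
        fix v assume "v \<in> {v. X *v v = 0}"
        then have "X *v v = 0" by simp
        then have k: "\<And>j. v \<bullet> (X *v ?f j) = 0" using kz by blast
        show "v \<in> span (?f ` {0,1,2})"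
        proof (rule in_span_fr[OF sp])
          fix i :: 7 assume "i \<notin> {0,1,2}"
          then have "i = 3 \<or> i = 4 \<or> i = 5 \<or> i = 6" using forall7[of "\<lambda>i. i \<in> {0,1,2} \<or> i = 3 \<or> i = 4 \<or> i = 5 \<or> i = 6"] by auto
          then show "?f i \<bullet> v = 0"
            using k[of 3] k[of 4] k[of 5] k[of 6] bp z by (auto simp: Xf fr_comm)
        qed
      qed
      show "span (?f ` {0,1,2}) \<subseteq> {v. X *v v = 0}"
        by (rule span_minimal[OF _ sk]) (auto simp: Xf z)
    qed
    have rng: "range (\<lambda>x. X *v x) = span (?f ` {3,4,5,6})"
    proof
      show "range (\<lambda>x. X *v x) \<subseteq> span (?f ` {3,4,5,6})"
      proof
        fix y assume "y \<in> range (\<lambda>x. X *v x)"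
        then obtain w where y: "y = X *v w" by blast
        have allin: "\<forall>i. X *v ?f i \<in> span (?f ` {3,4,5,6})"
          unfolding forall7 by (auto simp: Xf z span_zero intro: span_scale span_base span_neg)
        show "y \<in> span (?f ` {3,4,5,6})" unfolding y
          by (rule range_in_span[OF sp]) (use allin in blast)
      qed
      show "span (?f ` {3,4,5,6}) \<subseteq> range (\<lambda>x. X *v x)"
      proof (rule span_minimal[OF _ rs])
        have e: "?f 3 = X *v ((1/\<beta>) *\<^sub>R ?f 4)" "?f 4 = X *v ((- 1/\<beta>) *\<^sub>R ?f 3)"
          "?f 5 = X *v ((1/(\<alpha>+\<beta>)) *\<^sub>R ?f 6)" "?f 6 = X *v ((- 1/(\<alpha>+\<beta>)) *\<^sub>R ?f 5)"
          using bp z by (simp_all add: matrix_vector_mult_scaleR Xf mneg)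
        have "?f 3 \<in> range (\<lambda>x. X *v x)" by (subst e(1)) (rule rangeI)
        moreover have "?f 4 \<in> range (\<lambda>x. X *v x)" by (subst e(2)) (rule rangeI)
        moreover have "?f 5 \<in> range (\<lambda>x. X *v x)" by (subst e(3)) (rule rangeI)
        moreover have "?f 6 \<in> range (\<lambda>x. X *v x)" by (subst e(4)) (rule rangeI)
        ultimately show "?f ` {3,4,5,6} \<subseteq> range (\<lambda>x. X *v x)" by simp
      qed
    qed
    have "rank X = 4" unfolding rank_dim_range rng dim_fr_img[OF sp] by simp
    moreover have "associative (span {?f (ix 1), ?f (ix 2), ?f (ix 3)})"
      using assoc_span[OF sp] by (simp add: ix_vals ix_Suc0 fr_simps)
    ultimately show "\<alpha> + \<beta> = \<beta> \<and> rank X = 4 \<and>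
        {v. X *v v = 0} = span {?f (ix 1), ?f (ix 2), ?f (ix 3)} \<and>
        associative (span {?f (ix 1), ?f (ix 2), ?f (ix 3)})"
      using ker S z by simp
  qed
  have case3: "\<alpha> + \<beta> > \<alpha> \<and> \<alpha> > 0 \<longrightarrow> rank X = 6 \<and> {v. X *v v = 0} = span {?f (ix 1)}"
  proof
    assume h: "\<alpha> + \<beta> > \<alpha> \<and> \<alpha> > 0"
    then have ap: "\<alpha> > 0" and bp: "\<beta> > 0" by auto
    have abp: "\<alpha> + \<beta> \<noteq> 0" using ap bp by simp
    have nm1: "(- \<alpha> - \<beta>) / (\<alpha> + \<beta>) = -1" using abp by (simp add: divide_eq_eq)
    have ker: "{v. X *v v = 0} = span (?f ` {0})"
    proof
      show "{v. X *v v = 0} \<subseteq> span (?f ` {0})"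
      proof
        fix v assume "v \<in> {v. X *v v = 0}"
        then have "X *v v = 0" by simp
        then have k: "\<And>j. v \<bullet> (X *v ?f j) = 0" using kz by blast
        show "v \<in> span (?f ` {0})"
        proof (rule in_span_fr[OF sp])
          fix i :: 7 assume "i \<notin> {0}"
          then have "i = 1 \<or> i = 2 \<or> i = 3 \<or> i = 4 \<or> i = 5 \<or> i = 6" using forall7[of "\<lambda>i. i = 0 \<or> i = 1 \<or> i = 2 \<or> i = 3 \<or> i = 4 \<or> i = 5 \<or> i = 6"] by auto
          then show "?f i \<bullet> v = 0"
            using k[of 1] k[of 2] k[of 3] k[of 4] k[of 5] k[of 6] ap bp abp by (auto simp: Xf fr_comm)
        qed
      qed
      show "span (?f ` {0}) \<subseteq> {v. X *v v = 0}"
        by (rule span_minimal[OF _ sk]) (auto simp: Xf)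
    qed
    have rng: "range (\<lambda>x. X *v x) = span (?f ` {1,2,3,4,5,6})"
    proof
      show "range (\<lambda>x. X *v x) \<subseteq> span (?f ` {1,2,3,4,5,6})"
      proof
        fix y assume "y \<in> range (\<lambda>x. X *v x)"
        then obtain w where y: "y = X *v w" by blast
        have allin: "\<forall>i. X *v ?f i \<in> span (?f ` {1,2,3,4,5,6})"
          unfolding forall7 by (auto simp: Xf span_zero intro: span_scale span_base span_neg)
        show "y \<in> span (?f ` {1,2,3,4,5,6})" unfolding y
          by (rule range_in_span[OF sp]) (use allin in blast)
      qed
      show "span (?f ` {1,2,3,4,5,6}) \<subseteq> range (\<lambda>x. X *v x)"
      proof (rule span_minimal[OF _ rs])
        have e: "?f 1 = X *v ((1/\<alpha>) *\<^sub>R ?f 2)" "?f 2 = X *v ((- 1/\<alpha>) *\<^sub>R ?f 1)"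
          "?f 3 = X *v ((1/\<beta>) *\<^sub>R ?f 4)" "?f 4 = X *v ((- 1/\<beta>) *\<^sub>R ?f 3)"
          "?f 5 = X *v ((1/(\<alpha>+\<beta>)) *\<^sub>R ?f 6)" "?f 6 = X *v ((- 1/(\<alpha>+\<beta>)) *\<^sub>R ?f 5)"
          using ap bp abp by (simp_all add: matrix_vector_mult_scaleR Xf mneg nm1)
        have "?f 1 \<in> range (\<lambda>x. X *v x)" by (subst e(1)) (rule rangeI)
        moreover have "?f 2 \<in> range (\<lambda>x. X *v x)" by (subst e(2)) (rule rangeI)
        moreover have "?f 3 \<in> range (\<lambda>x. X *v x)" by (subst e(3)) (rule rangeI)
        moreover have "?f 4 \<in> range (\<lambda>x. X *v x)" by (subst e(4)) (rule rangeI)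
        moreover have "?f 5 \<in> range (\<lambda>x. X *v x)" by (subst e(5)) (rule rangeI)
        moreover have "?f 6 \<in> range (\<lambda>x. X *v x)" by (subst e(6)) (rule rangeI)
        ultimately show "?f ` {1,2,3,4,5,6} \<subseteq> range (\<lambda>x. X *v x)" by simp
      qed
    qed
    have "rank X = 6" unfolding rank_dim_range rng dim_fr_img[OF sp] by simp
    then show "rank X = 6 \<and> {v. X *v v = 0} = span {?f (ix 1)}"
      using ker by (simp add: ix_vals ix_Suc0)
  qed
  have tri: "\<alpha> + \<beta> = \<alpha> \<or> (\<alpha> + \<beta> > 0 \<and> \<alpha> = 0) \<or> (\<alpha> + \<beta> > \<alpha> \<and> \<alpha> > 0)"
    using a0 ab by auto
  show ?thesis
    apply (rule exI[of _ ?f], rule exI[of _ "\<alpha> + \<beta>"], rule exI[of _ \<beta>], rule exI[of _ \<alpha>])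
    using adapted entries tri case1 case2 case3 a0 ab by auto
qed

theorem corollary3p7:
  fixes X :: "real^7^7"
  assumes "X \<in> g2"
  shows "\<exists>f lam nu mu. g2_adapted f \<and> lam \<ge> nu \<and> nu \<ge> mu \<and> mu \<ge> 0 \<and> lam = nu + mu \<and>
     (\<forall>i\<in>{1..7}. \<forall>j\<in>{1..7}. (X *v f (ix i)) \<bullet> f (ix j) = normal_form mu nu lam i j) \<and>
     (lam = mu \<or> (lam > 0 \<and> mu = 0) \<or> (lam > mu \<and> mu > 0)) \<and>
     (lam = mu \<longrightarrow> lam = 0 \<and> mu = 0 \<and> nu = 0 \<and> X = 0) \<and>
     (lam > 0 \<and> mu = 0 \<longrightarrow> lam = nu \<and> rank X = 4 \<and>
        {v. X *v v = 0} = span {f (ix 1), f (ix 2), f (ix 3)} \<and>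
        associative (span {f (ix 1), f (ix 2), f (ix 3)})) \<and>
     (lam > mu \<and> mu > 0 \<longrightarrow> rank X = 6 \<and> {v. X *v v = 0} = span {f (ix 1)})"
proof -
  obtain a b c \<alpha> \<beta> where h: "special a b c" "X *v a = 0" "X *v b = - \<alpha> *\<^sub>R cross7 a b"
     "X *v c = - \<beta> *\<^sub>R cross7 a c" "0 \<le> \<alpha>" "\<alpha> \<le> \<beta>"
    using construct[OF assms] by blast
  show ?thesis by (rule conclude[OF assms h])
qed

end
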